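(* Let $r \geq 1$ be an integer. Call an $m \times n$ matrix $A$ with entries in $\{0,1\}$ a "good" group testing matrix if (1) for every $0$-$1$ vector $x \in \{0,1\}^n$ with at most $k=1$ nonzero entry, $x$ is uniquely determined by the Boolean test outcome vector $y \in \{0,1\}^m$ defined by $y_i = \max_{1 \le j \le n} A_{i,j} x_j$ (i.e. $y_i = 1$ if and only if some positive element $j$ has $A_{i,j}=1$), and (2) every row of $A$ contains at most $r$ entries equal to $1$. Then there exists a good group testing matrix with $m = r$ and $n = \frac{r(r+1)}{2}$, so that $\frac{n}{m} = \frac{r+1}{2}$. Moreover, there is no good group testing matrix of any dimension $m \times n$ with $\frac{n}{m} > \frac{r+1}{2}$.
   Context: Non-adaptive group testing: there are $n$ subjects and $m$ pooled tests, encoded by a $0$-$1$ pooling matrix $A$ with $A_{i,j}=1$ iff subject $j$'s sample is included in test $i$. A test is positive iff it contains at least one positive subject. "Correctly infer the status of each of the $n$ elements whenever there is at most one positive element" means the map from the set of status vectors with at most one positive entry to test outcome vectors is injective. The row constraint (at most $r$ ones per row) models the dilution constraint that at most $r$ samples can be pooled together. *)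

theory Defs
  imports Complex_Main
begin

text \<open>A 0-1 matrix of size m x n is represented by A :: nat => nat => bool, where
  A i j (for i < m, j < n) means the entry A_{i,j} equals 1. Entries outside the
  index range are irrelevant.\<close>

definition status_vectors :: "nat \<Rightarrow> (nat \<Rightarrow> bool) set" where
  "status_vectors n = {x. (\<forall>j. x j \<longrightarrow> j < n) \<and> card {j. x j} \<le> 1}"

definition outcome :: "nat \<Rightarrow> nat \<Rightarrow> (nat \<Rightarrow> nat \<Rightarrow> bool) \<Rightarrow> (nat \<Rightarrow> bool) \<Rightarrow> (nat \<Rightarrow> bool)" where
  "outcome m n A x = (\<lambda>i. i < m \<and> (\<exists>j<n. A i j \<and> x j))"

definition good_gt_matrix :: "nat \<Rightarrow> nat \<Rightarrow> nat \<Rightarrow> (nat \<Rightarrow> nat \<Rightarrow> bool) \<Rightarrow> bool" where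
  "good_gt_matrix r m n A \<longleftrightarrow>
     inj_on (outcome m n A) (status_vectors n) \<and>
     (\<forall>i<m. card {j. j < n \<and> A i j} \<le> r)"

end

theory Submission
  imports Defs
begin

lemma card_filter_sum: "card {j. j < (n::nat) \<and> P j} = (\<Sum>j<n. if P j then 1 else 0)"
proof -
  have "card {j. j < n \<and> P j} = card {j\<in>{..<n}. P j}" by (rule arg_cong[where f=card]) auto
  also have "\<dots> = (\<Sum>j\<in>{j\<in>{..<n}. P j}. 1)" by simp
  also have "\<dots> = (\<Sum>j<n. if P j then 1 else 0)" by (rule sum.inter_filter) simp
  finally show ?thesis .
qed

lemma status_cases:
  assumes "x \<in> status_vectors n"
  shows "x = (\<lambda>_. False) \<or> (\<exists>j<n. x = (\<lambda>l. l = j))"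
proof -
  have fin: "finite {j. x j}" using assms unfolding status_vectors_def
    by (metis (mono_tags, lifting) finite_lessThan finite_subset lessThan_iff mem_Collect_eq subsetI)
  have c: "card {j. x j} \<le> 1" using assms unfolding status_vectors_def by auto
  show ?thesis
  proof (cases "card {j. x j} = 0")
    case True
    then have "{j. x j} = {}" using fin by auto
    then show ?thesis by auto
  next
    case False
    then have "card {j. x j} = 1" using c by auto
    then obtain j where "{l. x l} = {j}" using card_1_singletonE by blast
    moreover then have "j < n" using assms unfolding status_vectors_def by auto
    ultimately show ?thesis by (metis (full_types) mem_Collect_eq singletonD singletonI)
  qed
qed

lemma unit_status: "j < n \<Longrightarrow> (\<lambda>l. l = j) \<in> status_vectors n"
  unfolding status_vectors_def by auto

lemma zero_status: "(\<lambda>_. False) \<in> status_vectors n"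
  unfolding status_vectors_def by auto

lemma upper:
  assumes g: "good_gt_matrix r m n A"
  shows "2 * n \<le> (r + 1) * m"
proof -
  define C where "C j = {i. i < m \<and> A i j}" for j
  have inj: "inj_on (outcome m n A) (status_vectors n)" and rows: "\<forall>i<m. card {j. j < n \<and> A i j} \<le> r"
    using g unfolding good_gt_matrix_def by auto
  have oc: "outcome m n A (\<lambda>l. l = j) = (\<lambda>i. i \<in> C j)" if "j < n" for j
    using that unfolding outcome_def C_def by auto
  have oz: "outcome m n A (\<lambda>_. False) = (\<lambda>i. False)" unfolding outcome_def by auto
  have ne: "C j \<noteq> {}" if "j < n" for j
  proof
    assume "C j = {}"
    then have "outcome m n A (\<lambda>l. l = j) = outcome m n A (\<lambda>_. False)" using oc[OF that] oz by auto
    then have "(\<lambda>l. l = j) = (\<lambda>_. False)" using inj_onD[OF inj] unit_status[OF that] zero_status by blast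
    then show False by metis
  qed
  have injC: "inj_on C {..<n}"
  proof (rule inj_onI)
    fix j k assume j: "j \<in> {..<n}" and k: "k \<in> {..<n}" and e: "C j = C k"
    then have "outcome m n A (\<lambda>l. l = j) = outcome m n A (\<lambda>l. l = k)" using oc by auto
    then have "(\<lambda>l. l = j) = (\<lambda>l. l = k)" using inj_onD[OF inj] unit_status j k by auto
    then show "j = k" by metis
  qed
  have finC: "finite (C j)" for j unfolding C_def by auto
  define J1 where "J1 = {j. j < n \<and> card (C j) = 1}"
  have "C ` J1 \<subseteq> (\<lambda>i. {i}) ` {..<m}"
  proof
    fix S assume "S \<in> C ` J1"
    then obtain j where "j \<in> J1" "S = C j" by auto
    then have "card (C j) = 1" unfolding J1_def by auto
    then obtain i where "C j = {i}" by (rule card_1_singletonE)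
    then show "S \<in> (\<lambda>i. {i}) ` {..<m}" using \<open>S = C j\<close> unfolding C_def by auto
  qed
  then have "card (C ` J1) \<le> m"
    by (metis card_image_le card_lessThan finite_imageI finite_lessThan card_mono le_trans)
  moreover have "card (C ` J1) = card J1"
    by (rule card_image, rule inj_on_subset[OF injC]) (auto simp: J1_def)
  ultimately have J1m: "card J1 \<le> m" by simp
  have J1s: "card J1 = (\<Sum>j<n. if card (C j) = 1 then 1 else 0)"
    unfolding J1_def by (rule card_filter_sum)
  have "(\<Sum>j<n. (2::nat)) \<le> (\<Sum>j<n. card (C j) + (if card (C j) = 1 then 1 else 0))"
  proof (rule sum_mono)
    fix j assume "j \<in> {..<n}"
    then have "card (C j) \<ge> 1" using ne finC by (simp add: Suc_leI card_gt_0_iff)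
    then show "2 \<le> card (C j) + (if card (C j) = 1 then 1 else 0)" by auto
  qed
  then have s1: "2 * n \<le> (\<Sum>j<n. card (C j)) + card J1" by (simp add: sum.distrib J1s)
  have "(\<Sum>j<n. card (C j)) = (\<Sum>j<n. \<Sum>i<m. if A i j then 1 else 0)"
    unfolding C_def using card_filter_sum by simp
  also have "\<dots> = (\<Sum>i<m. \<Sum>j<n. if A i j then 1 else 0)" by (rule sum.swap)
  also have "\<dots> = (\<Sum>i<m. card {j. j < n \<and> A i j})" using card_filter_sum by simp
  also have "\<dots> \<le> (\<Sum>i<m. r)" using rows by (intro sum_mono) auto
  finally have "(\<Sum>j<n. card (C j)) \<le> m * r" by simp
  moreover have "(r + 1) * m = m * r + m" by simp
  ultimately show ?thesis using s1 J1m by linarith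
qed

lemma gauss: "(\<Sum>b<r. Suc b) = r * (r + 1) div (2::nat)"
  by (induction r) auto

theorem mainTheorem1:
  fixes r :: nat
  assumes "r \<ge> 1"
  shows "(\<exists>A. good_gt_matrix r r (r * (r + 1) div 2) A) \<and>
         (\<forall>m n A. good_gt_matrix r m n A \<longrightarrow> \<not> (real n / real m > (real r + 1) / 2))"
proof
  define N where "N = r * (r + 1) div 2"
  define S where "S = (SIGMA b:{..<r}. {..b})"
  have finS: "finite S" unfolding S_def by auto
  have cS: "card S = N" unfolding S_def N_def by (simp add: gauss)
  obtain f where f: "bij_betw f {0..<N} S" using ex_bij_betw_nat_finite[OF finS] cS by metis
  define A where "A i j = (i = fst (f j) \<or> i = snd (f j))" for i j
  have fS: "j < N \<Longrightarrow> f j \<in> S" for j using f unfolding bij_betw_def by auto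
  have finj: "inj_on f {..<N}" using f unfolding bij_betw_def by (simp add: atLeast0LessThan)
  have oc: "outcome r N A (\<lambda>l. l = j) = (\<lambda>i. i = fst (f j) \<or> i = snd (f j))" if jN: "j < N" for j
  proof -
    obtain b a where "f j = (b, a)" "b < r" "a \<le> b" using fS[OF jN] unfolding S_def by auto
    have "outcome r N A (\<lambda>l. l = j) = (\<lambda>i. i < r \<and> A i j)"
      unfolding outcome_def using jN by (intro ext) blast
    also have "\<dots> = (\<lambda>i. i = fst (f j) \<or> i = snd (f j))"
      using \<open>f j = (b, a)\<close> \<open>b < r\<close> \<open>a \<le> b\<close> unfolding A_def by (intro ext) auto
    finally show ?thesis .
  qed
  have oz: "outcome r N A (\<lambda>_. False) = (\<lambda>i. False)" unfolding outcome_def by auto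
  have inj: "inj_on (outcome r N A) (status_vectors N)"
  proof (rule inj_onI)
    fix x y assume x: "x \<in> status_vectors N" and y: "y \<in> status_vectors N"
      and e: "outcome r N A x = outcome r N A y"
    show "x = y"
    proof (cases "x = (\<lambda>_. False)")
      case True
      show ?thesis
      proof (cases "y = (\<lambda>_. False)")
        case False
        then obtain k where k: "k < N" "y = (\<lambda>l. l = k)" using status_cases[OF y] by auto
        then show ?thesis using e True oz oc[OF k(1)] by (metis (full_types))
      qed (use True in auto)
    next
      case False
      then obtain j where j: "j < N" "x = (\<lambda>l. l = j)" using status_cases[OF x] by auto
      show ?thesis
      proof (cases "y = (\<lambda>_. False)")
        case True
        then show ?thesis using e j oz oc[OF j(1)] by (metis (full_types))
      next
        case False
        then obtain k where k: "k < N" "y = (\<lambda>l. l = k)" using status_cases[OF y] by auto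
        obtain b a where ba: "f j = (b, a)" "a \<le> b" using fS[OF j(1)] unfolding S_def by auto
        obtain b' a' where ba': "f k = (b', a')" "a' \<le> b'" using fS[OF k(1)] unfolding S_def by auto
        have "(\<lambda>i. i = b \<or> i = a) = (\<lambda>i. i = b' \<or> i = a')"
          using e j k oc[OF j(1)] oc[OF k(1)] ba ba' by simp
        then have "b = b' \<and> a = a'" using ba ba' by (metis le_antisym)
        then have "f j = f k" using ba ba' by simp
        then have "j = k" using finj j k by (auto dest: inj_onD)
        then show ?thesis using j k by simp
      qed
    qed
  qed
  have rows: "card {j. j < N \<and> A i j} \<le> r" if ir: "i < r" for i
  proof -
    define P where "P = {j \<in> {..<N}. f j \<in> {p \<in> S. fst p = i \<or> snd p = i}}"
    define U where "U = (\<lambda>a. (i, a)) ` {..i} \<union> (\<lambda>b. (b, i)) ` {i<..<r}"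
    have eq: "{j. j < N \<and> A i j} = P"
      unfolding A_def P_def using fS by auto
    have c1: "card P = card (f ` P)"
      by (rule card_image[symmetric], rule inj_on_subset[OF finj]) (auto simp: P_def)
    have sub: "f ` P \<subseteq> U"
    proof
      fix p assume "p \<in> f ` P"
      then have pS: "p \<in> S" and pi: "fst p = i \<or> snd p = i" unfolding P_def by auto
      obtain b a where p: "p = (b, a)" and "b < r" "a \<le> b" using pS unfolding S_def by auto
      show "p \<in> U"
      proof (cases "b = i")
        case True then show ?thesis using p \<open>a \<le> b\<close> unfolding U_def by auto
      next
        case False then have "a = i" "i < b" using pi p \<open>a \<le> b\<close> by auto
        then show ?thesis using p \<open>b < r\<close> unfolding U_def by auto
      qed
    qed
    have finU: "finite U" unfolding U_def by simp
    have "card U \<le> card ((\<lambda>a. (i, a)) ` {..i}) + card ((\<lambda>b. (b, i)) ` {i<..<r})"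
      unfolding U_def by (rule card_Un_le)
    also have "\<dots> \<le> card {..i} + card {i<..<r}"
      by (intro add_mono card_image_le) auto
    also have "\<dots> = r" using ir by simp
    finally have "card U \<le> r" .
    moreover have "card (f ` P) \<le> card U" by (rule card_mono[OF finU sub])
    ultimately show ?thesis using eq c1 by simp
  qed
  show "\<exists>A. good_gt_matrix r r (r * (r + 1) div 2) A"
    unfolding N_def[symmetric] good_gt_matrix_def using inj rows by blast
next
  show "\<forall>m n A. good_gt_matrix r m n A \<longrightarrow> \<not> (real n / real m > (real r + 1) / 2)"
  proof (intro allI impI)
    fix m n A assume g: "good_gt_matrix r m n A"
    have "2 * n \<le> (r + 1) * m" by (rule upper[OF g])
    then have "real (2 * n) \<le> real ((r + 1) * m)" by (simp only: of_nat_le_iff)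
    then have h: "2 * real n \<le> (real r + 1) * real m" by (simp only: of_nat_mult of_nat_add of_nat_1 of_nat_numeral)
    show "\<not> (real n / real m > (real r + 1) / 2)"
    proof
      assume gt: "real n / real m > (real r + 1) / 2"
      then have "m \<noteq> 0" using assms by (cases "m = 0") auto
      then have pos: "real m > 0" by simp
      have "(real r + 1) / 2 * real m < real n" using gt pos by (simp only: pos_less_divide_eq)
      then show False using h by linarith
    qed
  qed
qed

end
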